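(* Assume $a_1+a_2=1$. Then $$\Pi^2_0(z)=-\frac{n}{2}\,F(z)\,\log\!\Big(q\,\frac{1-a_0z}{z}\Big)=-\frac n2\Big(F(z)\log(1-a_0z)+\tilde G(z)\Big),$$ where $z=z_1$ and $q=z\exp(\tilde G(z)/F(z))$ is $q_1=e^{\Pi^1/\Pi^0}$ restricted to $z_2=0$.
   Context: Let $\theta_i=z_i\,\partial/\partial z_i$. Fix an integer $n\ge1$ and constants $a_0\neq0,a_1,a_2$. Consider the system $L_1=-n\theta_1\theta_2+\theta_1^2-a_0z_1(\theta_1+a_1)(\theta_1+a_2)$, $L_2=\theta_2^{n}-(-1)^n z_2\,(n\theta_2-\theta_1)(n\theta_2-\theta_1+1)\cdots(n\theta_2-\theta_1+n-1)$. Let $\Pi^0$ be the solution holomorphic at $0$ with $\Pi^0(0)=1$ and, for $a=1,2$, $\Pi^a=\Pi^0\log z_a+\sum_{i\ge0}\Pi^a_i(z_1)z_2^i$ solutions, normalized (by adding multiples of $\Pi^0$) so that $\Pi^a_0(0)=0$. Let $F(z)={}_2F_1(a_1,a_2;1;a_0z)$ and $\tilde G(z)=\sum_{k\ge1}\frac{(a_1)_k(a_2)_k}{(k!)^2}\Big[\sum_{j=1}^2\sum_{l=0}^{k-1}\big(\tfrac1{a_j+l}-\tfrac1{1+l}\big)\Big](a_0z)^k$. *)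

theory Defs
  imports "HOL-Analysis.Analysis"
begin

type_synonym cfun2 = "complex \<Rightarrow> complex \<Rightarrow> complex"

definition theta1 :: "cfun2 \<Rightarrow> cfun2" where
  "theta1 f = (\<lambda>z1 z2. z1 * deriv (\<lambda>w. f w z2) z1)"

definition theta2 :: "cfun2 \<Rightarrow> cfun2" where
  "theta2 f = (\<lambda>z1 z2. z2 * deriv (\<lambda>w. f z1 w) z2)"

definition theta1_plus :: "complex \<Rightarrow> cfun2 \<Rightarrow> cfun2" where
  "theta1_plus c f = (\<lambda>z1 z2. theta1 f z1 z2 + c * f z1 z2)"

definition L1 :: "nat \<Rightarrow> complex \<Rightarrow> complex \<Rightarrow> complex \<Rightarrow> cfun2 \<Rightarrow> cfun2" where
  "L1 n a0 a1 a2 f = (\<lambda>z1 z2.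
     - of_nat n * theta1 (theta2 f) z1 z2 + theta1 (theta1 f) z1 z2
     - a0 * z1 * theta1_plus a1 (theta1_plus a2 f) z1 z2)"

definition thetaM :: "nat \<Rightarrow> nat \<Rightarrow> cfun2 \<Rightarrow> cfun2" where
  "thetaM n j f = (\<lambda>z1 z2. of_nat n * theta2 f z1 z2 - theta1 f z1 z2 + of_nat j * f z1 z2)"

text \<open>L2 = theta2^n - (-1)^n z2 (n theta2 - theta1)(n theta2 - theta1 + 1)...(n theta2 - theta1 + n - 1).\<close>
definition L2 :: "nat \<Rightarrow> cfun2 \<Rightarrow> cfun2" where
  "L2 n f = (\<lambda>z1 z2. (theta2 ^^ n) f z1 z2
     - (-1) ^ n * z2 * foldr (thetaM n) [0..<n] f z1 z2)"

text \<open>Holomorphy on the polydisc of radius r (separately in each variable; by Hartogs'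
  theorem this is equivalent to joint holomorphy).\<close>
definition holo_polydisc :: "real \<Rightarrow> cfun2 \<Rightarrow> bool" where
  "holo_polydisc r f \<longleftrightarrow>
     (\<forall>z2\<in>ball 0 r. (\<lambda>w. f w z2) holomorphic_on ball 0 r) \<and>
     (\<forall>z1\<in>ball 0 r. (\<lambda>w. f z1 w) holomorphic_on ball 0 r)"

definition hypF :: "complex \<Rightarrow> complex \<Rightarrow> complex \<Rightarrow> complex \<Rightarrow> complex" where
  "hypF a0 a1 a2 z =
     (\<Sum>k. pochhammer a1 k * pochhammer a2 k / (of_nat (fact k))^2 * (a0 * z) ^ k)"

definition hypGt :: "complex \<Rightarrow> complex \<Rightarrow> complex \<Rightarrow> complex \<Rightarrow> complex" where
  "hypGt a0 a1 a2 z =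
     (\<Sum>k. (if k = 0 then 0 else
        pochhammer a1 k * pochhammer a2 k / (of_nat (fact k))^2 *
        (\<Sum>l<k. (1 / (a1 + of_nat l) - 1 / (1 + of_nat l))
               + (1 / (a2 + of_nat l) - 1 / (1 + of_nat l))) * (a0 * z) ^ k))"

end

theory Submission
  imports Defs "HOL-Complex_Analysis.Complex_Analysis"
begin


definition th :: "(complex \<Rightarrow> complex) \<Rightarrow> complex \<Rightarrow> complex" where
  "th u z = z * deriv u z"

definition Dop :: "complex \<Rightarrow> complex \<Rightarrow> complex \<Rightarrow> (complex \<Rightarrow> complex) \<Rightarrow> complex \<Rightarrow> complex" where
  "Dop a0 a1 a2 u z = th (th u) z - a0 * z * (th (\<lambda>w. th u w + a2 * u w) z + a1 * (th u z + a2 * u z))"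

lemma L1_eq: "L1 n a0 a1 a2 f z1 z2 = - of_nat n * th (\<lambda>w. theta2 f w z2) z1 + Dop a0 a1 a2 (\<lambda>w. f w z2) z1"
  by (simp add: L1_def Dop_def th_def[abs_def] theta1_def theta1_plus_def)

lemma Dop_expand:
  assumes "u holomorphic_on S" "open S" "z \<in> S"
  shows "Dop a0 a1 a2 u z = z^2 * deriv (deriv u) z + z * deriv u z
     - a0 * z * (z^2 * deriv (deriv u) z + (1+a1+a2) * z * deriv u z + a1*a2*u z)"
proof -
  have du: "(deriv u has_field_derivative deriv (deriv u) z) (at z)"
    using assms by (intro holomorphic_derivI holomorphic_deriv) auto
  have u: "(u has_field_derivative deriv u z) (at z)"
    using assms by (intro holomorphic_derivI) auto
  have d1: "((\<lambda>w. w * deriv u w) has_field_derivative (deriv u z + z * deriv (deriv u) z)) (at z)"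
    using DERIV_mult[OF DERIV_ident du] by (simp add: mult.commute)
  have e1: "th (th u) z = z * (deriv u z + z * deriv (deriv u) z)"
    unfolding th_def using DERIV_imp_deriv[OF d1] by (simp add: th_def[abs_def])
  have d2: "((\<lambda>w. w * deriv u w + a2 * u w) has_field_derivative (deriv u z + z * deriv (deriv u) z + a2 * deriv u z)) (at z)"
    using DERIV_add[OF d1 DERIV_cmult[OF u, of a2]] by simp
  have e2: "th (\<lambda>w. th u w + a2 * u w) z = z * (deriv u z + z * deriv (deriv u) z + a2 * deriv u z)"
    unfolding th_def using DERIV_imp_deriv[OF d2] by simp
  show ?thesis unfolding Dop_def e1 e2 by (simp add: th_def algebra_simps power2_eq_square)
qed

lemma hol_der: "u holomorphic_on S \<Longrightarrow> open S \<Longrightarrow> w \<in> S \<Longrightarrow> (u has_field_derivative deriv u w) (at w)"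
  by (intro holomorphic_derivI) auto

lemma hol_der2: "u holomorphic_on S \<Longrightarrow> open S \<Longrightarrow> w \<in> S \<Longrightarrow> (deriv u has_field_derivative deriv (deriv u) w) (at w)"
  by (intro holomorphic_derivI holomorphic_deriv) auto

lemma Dop_prod:
  assumes f: "f holomorphic_on S" and l: "l holomorphic_on S" and g: "g holomorphic_on S"
    and S: "open S" "z \<in> S"
  shows "Dop a0 a1 a2 (\<lambda>w. f w * l w + g w) z = l z * Dop a0 a1 a2 f z + Dop a0 a1 a2 g z
     + (1 - a0*z) * z^2 * (2*deriv f z * deriv l z + f z * deriv (deriv l) z)
     + z * f z * deriv l z * (1 - a0*z*(1+a1+a2))"
proof -
  define F where "F = (\<lambda>w. f w * l w + g w)"
  have FH: "F holomorphic_on S" unfolding F_def using f l g by (intro holomorphic_intros) auto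
  have dF: "deriv F w = deriv f w * l w + f w * deriv l w + deriv g w" if "w \<in> S" for w
  proof -
    have "(F has_field_derivative deriv f w * l w + f w * deriv l w + deriv g w) (at w)"
      unfolding F_def using DERIV_add[OF DERIV_mult[OF hol_der[OF f S(1) that] hol_der[OF l S(1) that]] hol_der[OF g S(1) that]]
      by (simp add: mult.commute)
    thus ?thesis by (rule DERIV_imp_deriv)
  qed
  have ev: "eventually (\<lambda>w. deriv F w = deriv f w * l w + f w * deriv l w + deriv g w) (nhds z)"
    using eventually_nhds_in_open[OF S] by eventually_elim (use dF in auto)
  have "deriv (deriv F) z = deriv (\<lambda>w. deriv f w * l w + f w * deriv l w + deriv g w) z"
    by (rule deriv_cong_ev[OF ev refl])
  also have "\<dots> = deriv (deriv f) z * l z + deriv f z * deriv l z + (deriv f z * deriv l z + f z * deriv (deriv l) z) + deriv (deriv g) z"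
  proof (rule DERIV_imp_deriv)
    show "((\<lambda>w. deriv f w * l w + f w * deriv l w + deriv g w) has_field_derivative
      deriv (deriv f) z * l z + deriv f z * deriv l z + (deriv f z * deriv l z + f z * deriv (deriv l) z) + deriv (deriv g) z) (at z)"
      using DERIV_add[OF DERIV_add[OF DERIV_mult[OF hol_der2[OF f S] hol_der[OF l S]] DERIV_mult[OF hol_der[OF f S] hol_der2[OF l S]]] hol_der2[OF g S]]
      by (simp add: mult.commute)
  qed
  finally have ddF: "deriv (deriv F) z = \<dots>" .
  have "Dop a0 a1 a2 F z = z^2 * deriv (deriv F) z + z * deriv F z
     - a0 * z * (z^2 * deriv (deriv F) z + (1+a1+a2) * z * deriv F z + a1*a2*F z)"
    by (rule Dop_expand[OF FH S])
  also have "\<dots> = l z * Dop a0 a1 a2 f z + Dop a0 a1 a2 g z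
     + (1 - a0*z) * z^2 * (2*deriv f z * deriv l z + f z * deriv (deriv l) z)
     + z * f z * deriv l z * (1 - a0*z*(1+a1+a2))"
    unfolding Dop_expand[OF f S] Dop_expand[OF g S] ddF dF[OF S(2)]
    by (simp add: F_def algebra_simps power2_eq_square)
  finally show ?thesis unfolding F_def .
qed

lemma th_holo: "u holomorphic_on S \<Longrightarrow> open S \<Longrightarrow> th u holomorphic_on S"
  unfolding th_def[abs_def] by (intro holomorphic_intros holomorphic_deriv) auto

lemma Dop_holo:
  assumes "u holomorphic_on S" "open S"
  shows "Dop a0 a1 a2 u holomorphic_on S"
proof -
  have "(\<lambda>z. z^2 * deriv (deriv u) z + z * deriv u z
     - a0 * z * (z^2 * deriv (deriv u) z + (1+a1+a2) * z * deriv u z + a1*a2*u z)) holomorphic_on S"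
    using assms by (intro holomorphic_intros holomorphic_deriv) auto
  thus ?thesis by (rule holomorphic_transform) (use Dop_expand[OF assms] in auto)
qed

definition Th :: "complex fps \<Rightarrow> complex fps" where "Th U = fps_X * fps_deriv U"

lemma Th_nth [simp]: "Th U $ k = of_nat k * U $ k"
  by (cases k) (auto simp: Th_def)

lemma th_fps: "u has_fps_expansion U \<Longrightarrow> th u has_fps_expansion Th U"
  unfolding th_def[abs_def] Th_def
  by (intro has_fps_expansion_mult has_fps_expansion_fps_X has_fps_expansion_deriv)

definition DF :: "complex \<Rightarrow> complex \<Rightarrow> complex \<Rightarrow> complex fps \<Rightarrow> complex fps" where
  "DF a0 a1 a2 U = Th (Th U) - fps_const a0 * fps_X * (Th (Th U + fps_const a2 * U) + fps_const a1 * (Th U + fps_const a2 * U))"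

lemma Dop_fps: "u has_fps_expansion U \<Longrightarrow> Dop a0 a1 a2 u has_fps_expansion DF a0 a1 a2 U"
  unfolding Dop_def[abs_def] DF_def
  by (intro has_fps_expansion_diff has_fps_expansion_mult has_fps_expansion_cmult_left
        has_fps_expansion_fps_X th_fps has_fps_expansion_add has_fps_expansion_const) auto

lemma DF_nth: "DF a0 a1 a2 U $ k = of_nat k ^ 2 * U $ k
   - a0 * (if k = 0 then 0 else (of_nat k - 1 + a1) * (of_nat k - 1 + a2) * U $ (k - 1))"
  by (cases k) (auto simp: DF_def algebra_simps power2_eq_square)

lemma Dop_coeff:
  assumes u: "u holomorphic_on ball 0 R" and R: "R > 0"
    and eq: "\<forall>z\<in>ball 0 R. Dop a0 a1 a2 u z = v z" and v: "v has_fps_expansion V"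
  shows "DF a0 a1 a2 (fps_expansion u 0) = V"
proof -
  have "u has_fps_expansion fps_expansion u 0"
    using u R by (intro has_fps_expansion_fps_expansion) auto
  hence "Dop a0 a1 a2 u has_fps_expansion DF a0 a1 a2 (fps_expansion u 0)" by (rule Dop_fps)
  moreover have "eventually (\<lambda>z. Dop a0 a1 a2 u z = v z) (nhds 0)"
    using eventually_nhds_in_open[of "ball 0 R" 0] R eq by (auto elim: eventually_mono)
  ultimately have "v has_fps_expansion DF a0 a1 a2 (fps_expansion u 0)"
    using has_fps_expansion_cong by blast
  thus ?thesis using v fps_expansion_unique_complex by blast
qed

lemma eval_expansion_ball:
  assumes "u holomorphic_on ball 0 R" "z \<in> ball 0 R"
  shows "u z = (\<Sum>k. fps_expansion u 0 $ k * z ^ k)"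
proof -
  have "u holomorphic_on eball 0 (ereal R)" using assms by simp
  from eval_fps_expansion[OF this, of z] assms show ?thesis by (simp add: eval_fps_def)
qed

lemma fps_expansion_0: "fps_expansion u 0 $ 0 = u 0"
  by (simp add: fps_expansion_def)

definition cF :: "complex \<Rightarrow> complex \<Rightarrow> complex \<Rightarrow> nat \<Rightarrow> complex" where
  "cF a0 a1 a2 k = pochhammer a1 k * pochhammer a2 k / (of_nat (fact k))^2 * a0^k"

definition SG :: "complex \<Rightarrow> complex \<Rightarrow> nat \<Rightarrow> complex" where
  "SG a1 a2 k = (\<Sum>l<k. (1 / (a1 + of_nat l) - 1 / (1 + of_nat l))
               + (1 / (a2 + of_nat l) - 1 / (1 + of_nat l)))"

lemma t1: fixes A B x y K f a :: complex assumes "K \<noteq> 0" "f \<noteq> 0"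
  shows "(A*x)*(B*y)/(K*f)^2*(a^k*a) = (A*B/f^2*a^k)*(x*y*a/K^2)"
  using assms by (simp add: power_mult_distrib mult_ac)
lemma cF_Suc: "of_nat (Suc k)^2 * cF a0 a1 a2 (Suc k) = a0 * (of_nat k + a1) * (of_nat k + a2) * cF a0 a1 a2 k"
proof -
  define fk :: complex where "fk = of_nat (fact k)"
  define K :: complex where "K = of_nat (Suc k)"
  have fk: "fk \<noteq> 0" unfolding fk_def by simp
  have sk: "K \<noteq> 0" unfolding K_def by (simp del: of_nat_Suc)
  have ff: "(of_nat (fact (Suc k)) :: complex) = K * fk"
  proof -
    have "fact (Suc k) = Suc k * fact k" by simp
    thus ?thesis unfolding K_def fk_def by (simp only: of_nat_mult)
  qed
  have "cF a0 a1 a2 (Suc k) = (pochhammer a1 k * pochhammer a2 k / fk^2 * a0^k) * ((a1 + of_nat k) * (a2 + of_nat k) * a0 / K^2)"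
    unfolding cF_def pochhammer_Suc ff power_Suc2 by (rule t1[OF sk fk])
  also have "\<dots> = cF a0 a1 a2 k * ((a1 + of_nat k) * (a2 + of_nat k) * a0) / K^2"
    unfolding cF_def fk_def by simp
  finally have "K^2 * cF a0 a1 a2 (Suc k) = cF a0 a1 a2 k * ((a1 + of_nat k) * (a2 + of_nat k) * a0)"
    using sk by simp
  thus ?thesis unfolding K_def by (simp only: mult_ac add_ac)
qed

lemma alg: fixes K a1 a2 c c' S U a0 :: complex
  assumes n1: "a1+K\<noteq>0" and n2: "a2+K\<noteq>0" and n3: "1+K\<noteq>0"
   and R: "(K+1)^2*c' = a0*(K+a1)*(K+a2)*c"
   and E: "(K+1)^2*U = a0*(K+a1)*(K+a2)*(c*S) - 2*(K+1)*c' + a0*(2*K+a1+a2)*c"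
 shows "U = c' * (S + 1/(a1+K) + 1/(a2+K) - 2/(1+K))"
proof -
  have "(K+1)^2 * (c' * (S + 1/(a1+K) + 1/(a2+K) - 2/(1+K)))
     = ((K+1)^2*c') * S + ((K+1)^2*c')/(a1+K) + ((K+1)^2*c')/(a2+K) - 2*(K+1)*c'"
    using n3 by (simp add: field_simps power2_eq_square)
  also have "\<dots> = a0*(K+a1)*(K+a2)*c * S + a0*(K+a2)*c + a0*(K+a1)*c - 2*(K+1)*c'"
  proof -
    have "a0*(K+a1)*(K+a2)*c/(a1+K) = a0*(K+a2)*c" using n1 by (simp add: add.commute)
    moreover have "a0*(K+a1)*(K+a2)*c/(a2+K) = a0*(K+a1)*c" using n2 by (simp add: add.commute)
    ultimately show ?thesis unfolding R by simp
  qed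
  also have "\<dots> = (K+1)^2*U" unfolding E by (simp add: algebra_simps)
  finally have "(K+1)^2 * (c' * (S + 1/(a1+K) + 1/(a2+K) - 2/(1+K))) = (K+1)^2 * U" .
  moreover have "(K+1)^2 \<noteq> 0" using n3 by (simp add: add.commute)
  ultimately show ?thesis by (metis mult_left_cancel)
qed

lemma DF_nth_Suc: "DF a0 a1 a2 U $ Suc k = of_nat (Suc k) ^ 2 * U $ Suc k
   - a0 * (of_nat k + a1) * (of_nat k + a2) * U $ k"
  by (simp add: DF_def algebra_simps power2_eq_square)

lemma DF_zero_unique:
  fixes U :: "complex fps"
  assumes "\<forall>k. DF a0 a1 a2 U $ k = 0" "U $ 0 = 0"
  shows "U $ k = 0"
proof (induction k)
  case 0 thus ?case using assms by simp
next
  case (Suc k)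
  have "DF a0 a1 a2 U $ Suc k = 0" using assms by simp
  thus ?case using Suc by (simp add: DF_nth_Suc del: of_nat_Suc)
qed

lemma DF_F:
  fixes U :: "complex fps"
  assumes "\<forall>k. DF a0 a1 a2 U $ k = 0" "U $ 0 = 1"
  shows "U $ k = cF a0 a1 a2 k"
proof (induction k)
  case 0 thus ?case using assms by (simp add: cF_def)
next
  case (Suc k)
  have "DF a0 a1 a2 U $ Suc k = 0" using assms by simp
  hence "of_nat (Suc k)^2 * U $ Suc k = a0 * (of_nat k + a1) * (of_nat k + a2) * U $ k"
    by (simp add: DF_nth_Suc algebra_simps del: of_nat_Suc)
  also have "\<dots> = of_nat (Suc k)^2 * cF a0 a1 a2 (Suc k)" using Suc cF_Suc by simp
  finally show ?case by (simp del: of_nat_Suc)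
qed

lemma DF_G:
  fixes U :: "complex fps"
  assumes "\<forall>k. DF a0 a1 a2 U $ k = - 2 * of_nat k * cF a0 a1 a2 k
              + a0 * (if k = 0 then 0 else (2 * (of_nat k - 1) + a1 + a2) * cF a0 a1 a2 (k - 1))"
    and "U $ 0 = 0" and anpi: "\<forall>l::nat. a1 + of_nat l \<noteq> 0 \<and> a2 + of_nat l \<noteq> 0"
  shows "U $ k = cF a0 a1 a2 k * SG a1 a2 k"
proof (induction k)
  case 0 thus ?case using assms by (simp add: SG_def)
next
  case (Suc k)
  have ne1: "(1::complex) + of_nat k \<noteq> 0"
    by (metis of_nat_Suc of_nat_eq_0_iff nat.distinct(1) add.commute)
  have ne: "a1 + of_nat k \<noteq> 0" "a2 + of_nat k \<noteq> 0" "(1::complex) + of_nat k \<noteq> 0" using anpi ne1 by auto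
  have "DF a0 a1 a2 U $ Suc k = - 2 * of_nat (Suc k) * cF a0 a1 a2 (Suc k)
              + a0 * (2 * of_nat k + a1 + a2) * cF a0 a1 a2 k" using assms(1)[rule_format, of "Suc k"] by simp
  hence e: "of_nat (Suc k)^2 * U $ Suc k = a0 * (of_nat k + a1) * (of_nat k + a2) * U $ k
       - 2 * of_nat (Suc k) * cF a0 a1 a2 (Suc k) + a0 * (2 * of_nat k + a1 + a2) * cF a0 a1 a2 k"
    by (simp add: DF_nth_Suc algebra_simps del: of_nat_Suc)
  have SGs: "SG a1 a2 (Suc k) = SG a1 a2 k + 1/(a1 + of_nat k) + 1/(a2 + of_nat k) - 2/(1 + of_nat k)"
    by (simp add: SG_def)
  have sk: "(of_nat (Suc k)::complex) = of_nat k + 1" by simp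
  have R: "(of_nat k+1)^2 * cF a0 a1 a2 (Suc k) = a0*(of_nat k+a1)*(of_nat k+a2)*cF a0 a1 a2 k"
    using cF_Suc[of k a0 a1 a2] unfolding sk .
  have E: "(of_nat k + 1)^2 * fps_nth U (Suc k) = a0 * (of_nat k + a1) * (of_nat k + a2) * (cF a0 a1 a2 k * SG a1 a2 k)
     - 2 * (of_nat k + 1) * cF a0 a1 a2 (Suc k) + a0 * (2 * of_nat k + a1 + a2) * cF a0 a1 a2 k"
    using e unfolding sk Suc .
  have "fps_nth U (Suc k) = cF a0 a1 a2 (Suc k) * (SG a1 a2 k + 1/(a1 + of_nat k) + 1/(a2 + of_nat k) - 2/(1 + of_nat k))"
    using alg[OF ne R E] .
  thus ?case using SGs by simp
qed



lemma hypF_eq: "hypF a0 a1 a2 z = (\<Sum>k. cF a0 a1 a2 k * z ^ k)"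
  unfolding hypF_def cF_def by (simp add: power_mult_distrib mult_ac)

lemma hypGt_eq: "hypGt a0 a1 a2 z = (\<Sum>k. cF a0 a1 a2 k * SG a1 a2 k * z ^ k)"
proof -
  have "(if k = 0 then 0 else
        pochhammer a1 k * pochhammer a2 k / (of_nat (fact k))^2 * SG a1 a2 k * (a0 * z) ^ k)
       = cF a0 a1 a2 k * SG a1 a2 k * z ^ k" for k
  proof (cases "k = 0")
    case True thus ?thesis by (simp add: SG_def)
  next
    case False thus ?thesis unfolding cF_def power_mult_distrib by (simp only: mult_ac if_False)
  qed
  thus ?thesis unfolding hypGt_def SG_def[symmetric] by (simp only:)
qed

lemma sol_F:
  assumes f: "f holomorphic_on ball 0 R" and R: "R > 0"
    and eq: "\<forall>z\<in>ball 0 R. Dop a0 a1 a2 f z = 0" and f0: "f 0 = 1"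
  shows "fps_expansion f 0 $ k = cF a0 a1 a2 k"
proof -
  have D0: "DF a0 a1 a2 (fps_expansion f 0) = 0"
    by (rule Dop_coeff[OF f R, of _ _ _ "\<lambda>_. 0"]) (use eq in auto)
  show ?thesis by (rule DF_F) (auto simp: D0 fps_expansion_0 f0)
qed

lemma sol_F':
  assumes f: "f holomorphic_on ball 0 R" and R: "R > 0"
    and eq: "\<forall>z\<in>ball 0 R. Dop a0 a1 a2 f z = 0" and f0: "f 0 = 1" and z: "z \<in> ball 0 R"
  shows "f z = hypF a0 a1 a2 z"
  unfolding eval_expansion_ball[OF f z] hypF_eq sol_F[OF f R eq f0] ..

lemma sol_zero:
  assumes u: "u holomorphic_on ball 0 R" and R: "R > 0"
    and eq: "\<forall>z\<in>ball 0 R. Dop a0 a1 a2 u z = 0" and u0: "u 0 = 0" and z: "z \<in> ball 0 R"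
  shows "u z = 0"
proof -
  have D0: "DF a0 a1 a2 (fps_expansion u 0) = 0"
    by (rule Dop_coeff[OF u R, of _ _ _ "\<lambda>_. 0"]) (use eq in auto)
  have "fps_expansion u 0 $ k = 0" for k by (rule DF_zero_unique[of a0 a1 a2]) (auto simp: D0 fps_expansion_0 u0)
  thus ?thesis unfolding eval_expansion_ball[OF u z] by simp
qed

lemma sol_G:
  assumes f: "f holomorphic_on ball 0 R" and R: "R > 0"
    and eqf: "\<forall>z\<in>ball 0 R. Dop a0 a1 a2 f z = 0" and f0: "f 0 = 1"
    and g: "g holomorphic_on ball 0 R"
    and eqg: "\<forall>z\<in>ball 0 R. Dop a0 a1 a2 g z = - 2 * th f z + a0 * z * (2 * th f z + (a1 + a2) * f z)"
    and g0: "g 0 = 0" and anpi: "\<forall>l::nat. a1 + of_nat l \<noteq> 0 \<and> a2 + of_nat l \<noteq> 0"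
    and z: "z \<in> ball 0 R"
  shows "g z = hypGt a0 a1 a2 z"
proof -
  define F where "F = fps_expansion f 0"
  have fF: "f has_fps_expansion F" unfolding F_def using f R by (intro has_fps_expansion_fps_expansion) auto
  have rhs: "(\<lambda>z. - 2 * th f z + a0 * z * (2 * th f z + (a1 + a2) * f z)) has_fps_expansion
     (fps_const (-2) * Th F + fps_const a0 * fps_X * (fps_const 2 * Th F + fps_const (a1 + a2) * F))"
    by (intro has_fps_expansion_add has_fps_expansion_cmult_left has_fps_expansion_mult
          has_fps_expansion_fps_X th_fps fF)
  have D: "DF a0 a1 a2 (fps_expansion g 0) = fps_const (-2) * Th F + fps_const a0 * fps_X * (fps_const 2 * Th F + fps_const (a1 + a2) * F)"
    by (rule Dop_coeff[OF g R eqg rhs])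
  have Fk: "F $ k = cF a0 a1 a2 k" for k unfolding F_def by (rule sol_F[OF f R eqf f0])
  have "fps_expansion g 0 $ k = cF a0 a1 a2 k * SG a1 a2 k" for k
  proof (rule DF_G[OF _ _ anpi])
    show "\<forall>k. DF a0 a1 a2 (fps_expansion g 0) $ k = - 2 * of_nat k * cF a0 a1 a2 k
              + a0 * (if k = 0 then 0 else (2 * (of_nat k - 1) + a1 + a2) * cF a0 a1 a2 (k - 1))"
    proof
      fix k show "DF a0 a1 a2 (fps_expansion g 0) $ k = - 2 * of_nat k * cF a0 a1 a2 k
              + a0 * (if k = 0 then 0 else (2 * (of_nat k - 1) + a1 + a2) * cF a0 a1 a2 (k - 1))"
        unfolding D mult.assoc by (cases k) (simp_all add: Fk ring_distribs)
    qed
    show "fps_expansion g 0 $ 0 = 0" by (simp add: fps_expansion_0 g0)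
  qed
  hence "(\<Sum>k. fps_expansion g 0 $ k * z ^ k) = (\<Sum>k. cF a0 a1 a2 k * SG a1 a2 k * z ^ k)" by (simp only:)
  thus ?thesis unfolding eval_expansion_ball[OF g z] hypGt_eq .
qed



lemma Dop_lin:
  assumes u: "u holomorphic_on S" and v: "v holomorphic_on S" and S: "open S" "z \<in> S"
  shows "Dop a0 a1 a2 (\<lambda>w. a * u w + b * v w) z = a * Dop a0 a1 a2 u z + b * Dop a0 a1 a2 v z"
proof -
  define F where "F = (\<lambda>w. a * u w + b * v w)"
  have FH: "F holomorphic_on S" unfolding F_def using u v by (intro holomorphic_intros) auto
  have dF: "deriv F w = a * deriv u w + b * deriv v w" if "w \<in> S" for w
  proof -
    have "(F has_field_derivative a * deriv u w + b * deriv v w) (at w)"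
      unfolding F_def using DERIV_add[OF DERIV_cmult[OF hol_der[OF u S(1) that]] DERIV_cmult[OF hol_der[OF v S(1) that]]]
      by simp
    thus ?thesis by (rule DERIV_imp_deriv)
  qed
  have ev: "eventually (\<lambda>w. deriv F w = a * deriv u w + b * deriv v w) (nhds z)"
    using eventually_nhds_in_open[OF S] by eventually_elim (use dF in auto)
  have "deriv (deriv F) z = deriv (\<lambda>w. a * deriv u w + b * deriv v w) z"
    by (rule deriv_cong_ev[OF ev refl])
  also have "\<dots> = a * deriv (deriv u) z + b * deriv (deriv v) z"
    by (rule DERIV_imp_deriv, rule DERIV_add[OF DERIV_cmult[OF hol_der2[OF u S]] DERIV_cmult[OF hol_der2[OF v S]]])
  finally have ddF: "deriv (deriv F) z = \<dots>" .
  show ?thesis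
    unfolding F_def[symmetric] Dop_expand[OF FH S] Dop_expand[OF u S] Dop_expand[OF v S] ddF dF[OF S(2)]
    by (simp add: F_def algebra_simps)
qed

lemma deriv_Ln_eq: "z \<notin> \<real>\<^sub>\<le>\<^sub>0 \<Longrightarrow> deriv Ln z = 1 / z"
  using DERIV_imp_deriv[OF has_field_derivative_Ln] by (simp add: divide_inverse)

lemma deriv2_Ln_eq:
  assumes z: "z \<notin> \<real>\<^sub>\<le>\<^sub>0" shows "deriv (deriv Ln) z = - 1 / z^2"
proof -
  have op: "open (- \<real>\<^sub>\<le>\<^sub>0 :: complex set)" by auto
  have "eventually (\<lambda>w. deriv Ln w = inverse w) (nhds z)"
    using eventually_nhds_in_open[OF op, of z] z
    by (auto elim!: eventually_mono simp: deriv_Ln_eq divide_inverse)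
  hence "deriv (deriv Ln) z = deriv inverse z" by (rule deriv_cong_ev) simp
  also have "\<dots> = - 1 / z^2"
  proof (rule DERIV_imp_deriv)
    have "z \<noteq> 0" using z by auto
    thus "(inverse has_field_derivative - 1 / z^2) (at z)"
      using DERIV_inverse[of z] by (simp add: divide_inverse power2_eq_square)
  qed
  finally show ?thesis .
qed

lemma one_minus_notin:
  fixes a0 w :: complex assumes "norm (a0 * w) < 1" shows "1 - a0 * w \<notin> \<real>\<^sub>\<le>\<^sub>0"
proof -
  have "Re (a0 * w) \<le> norm (a0 * w)" by (rule complex_Re_le_cmod)
  hence "Re (1 - a0 * w) > 0" using assms by simp
  thus ?thesis by (auto simp: complex_nonpos_Reals_iff)
qed

lemma deriv_L2:
  assumes "norm (a0 * w) < 1"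
  shows "((\<lambda>w. Ln (1 - a0 * w)) has_field_derivative - a0 / (1 - a0 * w)) (at w)"
proof -
  have g: "((\<lambda>w. 1 - a0 * w) has_field_derivative - a0) (at w)"
    by (auto intro!: derivative_eq_intros)
  have "((\<lambda>w. Ln (1 - a0 * w)) has_field_derivative inverse (1 - a0 * w) * (- a0)) (at w)"
    by (rule DERIV_chain2[of Ln, OF has_field_derivative_Ln[OF one_minus_notin[OF assms]] g])
  thus ?thesis by (simp add: divide_inverse mult.commute)
qed



lemma alg2: fixes a0 z d f :: complex assumes ne: "1 - a0 * z \<noteq> 0"
  shows "- 2 * z * d + a0 * z * (2 * z * d + f)
       + (1 - a0*z) * z^2 * (2*d * (- a0 / (1 - a0 * z)) + f * (- (a0 ^ 2) / ((1 - a0 * z) ^ 2)))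
       + z * f * (- a0 / (1 - a0 * z)) * (1 - a0*z*2) = - 2 * z * d"
proof -
  define q where "q = 1 - a0 * z"
  have q: "q \<noteq> 0" using ne q_def by simp
  have az: "a0 * z = 1 - q" unfolding q_def by simp
  have e1: "(1 - a0*z) * z^2 * (2*d * (- a0 / (1 - a0 * z)) + f * (- (a0 ^ 2) / ((1 - a0 * z) ^ 2)))
      = - 2 * (a0 * z) * z * d - (a0 * z)^2 * f / q"
    unfolding q_def[symmetric] using q by (simp add: field_simps power2_eq_square)
  have e2: "z * f * (- a0 / (1 - a0 * z)) * (1 - a0*z*2) = - (a0 * z) * f * (1 - 2 * (a0 * z)) / q"
    unfolding q_def[symmetric] using q by (simp add: field_simps)
  have "- 2 * z * d + a0 * z * (2 * z * d + f) + (- 2 * (a0 * z) * z * d - (a0 * z)^2 * f / q)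
      + (- (a0 * z) * f * (1 - 2 * (a0 * z)) / q) = - 2 * z * d"
    unfolding az using q by (simp add: field_simps power2_eq_square)
  thus ?thesis unfolding e1 e2 .
qed

lemma final_from_ODE:
  fixes n :: nat and a0 a1 a2 :: complex and r :: real and f g h :: "complex \<Rightarrow> complex"
  assumes a0: "a0 \<noteq> 0" and a12: "a1 + a2 = 1"
    and anpi: "\<forall>l::nat. a1 + of_nat l \<noteq> 0 \<and> a2 + of_nat l \<noteq> 0" and r: "r > 0"
    and fH: "f holomorphic_on ball 0 r" and gH: "g holomorphic_on ball 0 r" and hH: "h holomorphic_on ball 0 r"
    and f0: "f 0 = 1" and g0: "g 0 = 0" and h0: "h 0 = 0"
    and eqf: "\<forall>z\<in>ball 0 r. Dop a0 a1 a2 f z = 0"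
    and eqg: "\<forall>z\<in>ball 0 r. Dop a0 a1 a2 g z = - 2 * th f z + a0 * z * (2 * th f z + (a1 + a2) * f z)"
    and eqh: "\<forall>z\<in>ball 0 r. Dop a0 a1 a2 h z = of_nat n * th f z"
  shows "(\<forall>z\<in>ball 0 r. norm (a0 * z) < 1 \<longrightarrow>
        g z = hypGt a0 a1 a2 z \<and>
        h z = - (of_nat n / 2) * (hypF a0 a1 a2 z * Ln (1 - a0 * z) + hypGt a0 a1 a2 z))
     \<and> (\<forall>\<^sub>F z in at 0.
        h z = - (of_nat n / 2) * hypF a0 a1 a2 z *
          Ln ((z * exp (hypGt a0 a1 a2 z / hypF a0 a1 a2 z)) * (1 - a0 * z) / z))"
proof -
  define R where "R = min r (1 / norm a0)"
  have R: "R > 0" using r a0 by (simp add: R_def)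
  have BR: "ball 0 R \<subseteq> ball (0::complex) r" by (auto simp: R_def)
  have inR: "norm (a0 * z) < 1" if "z \<in> ball 0 R" for z
  proof -
    have "norm z < 1 / norm a0" using that by (simp add: R_def)
    thus ?thesis using a0 by (simp add: norm_mult field_simps)
  qed
  have inR': "z \<in> ball 0 R" if "z \<in> ball 0 r" "norm (a0 * z) < 1" for z
  proof -
    have "norm z < 1 / norm a0" using that a0 by (simp add: norm_mult field_simps)
    thus ?thesis using that by (simp add: R_def)
  qed
  have fF: "f z = hypF a0 a1 a2 z" if "z \<in> ball 0 r" for z by (rule sol_F'[OF fH r eqf f0 that])
  have gG: "g z = hypGt a0 a1 a2 z" if "z \<in> ball 0 r" for z by (rule sol_G[OF fH r eqf f0 gH eqg g0 anpi that])
  define L where "L = (\<lambda>w. Ln (1 - a0 * w))"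
  define c :: complex where "c = - (of_nat n / 2)"
  define K where "K = (\<lambda>w. f w * L w + g w)"
  define k where "k = (\<lambda>w. c * K w)"
  have LH: "L holomorphic_on ball 0 R" unfolding L_def
    by (intro holomorphic_intros) (auto intro!: one_minus_notin inR)
  have fR: "f holomorphic_on ball 0 R" "g holomorphic_on ball 0 R" "h holomorphic_on ball 0 R"
    using fH gH hH BR by (auto intro: holomorphic_on_subset)
  have KH: "K holomorphic_on ball 0 R" unfolding K_def using fR LH by (intro holomorphic_intros) auto
  have dL: "deriv L w = - a0 / (1 - a0 * w)" if "w \<in> ball 0 R" for w
    unfolding L_def by (rule DERIV_imp_deriv[OF deriv_L2[OF inR[OF that]]])
  have ne: "1 - a0 * w \<noteq> 0" if "w \<in> ball 0 R" for w
    using inR[OF that] by (metis norm_one order_less_irrefl right_minus_eq)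
  have ddL: "deriv (deriv L) z = - (a0 ^ 2) / ((1 - a0 * z) ^ 2)" if z: "z \<in> ball 0 R" for z
  proof -
    have "eventually (\<lambda>w. deriv L w = - a0 / (1 - a0 * w)) (nhds z)"
      using eventually_nhds_in_open[of "ball 0 R" z] z by (auto elim!: eventually_mono simp: dL)
    hence "deriv (deriv L) z = deriv (\<lambda>w. - a0 / (1 - a0 * w)) z" by (rule deriv_cong_ev) simp
    also have "\<dots> = - (a0 ^ 2) / ((1 - a0 * z) ^ 2)"
    proof (rule DERIV_imp_deriv)
      show "((\<lambda>w. - a0 / (1 - a0 * w)) has_field_derivative - (a0 ^ 2) / ((1 - a0 * z) ^ 2)) (at z)"
        using ne[OF z] by (auto intro!: derivative_eq_intros simp: power2_eq_square field_simps)
    qed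
    finally show ?thesis .
  qed
  have DK: "Dop a0 a1 a2 K z = - 2 * th f z" if z: "z \<in> ball 0 R" for z
  proof -
    have zr: "z \<in> ball 0 r" using BR z by auto
    have "Dop a0 a1 a2 K z = L z * Dop a0 a1 a2 f z + Dop a0 a1 a2 g z
     + (1 - a0*z) * z^2 * (2*deriv f z * deriv L z + f z * deriv (deriv L) z)
     + z * f z * deriv L z * (1 - a0*z*(1+a1+a2))"
      unfolding K_def by (rule Dop_prod[OF fR(1) LH fR(2) _ z]) simp
    also have "\<dots> = - 2 * z * deriv f z + a0 * z * (2 * z * deriv f z + f z)
       + (1 - a0*z) * z^2 * (2*deriv f z * (- a0 / (1 - a0 * z)) + f z * (- (a0 ^ 2) / ((1 - a0 * z) ^ 2)))
       + z * f z * (- a0 / (1 - a0 * z)) * (1 - a0*z*2)"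
      using eqf eqg zr a12 by (simp add: dL[OF z] ddL[OF z] th_def add.assoc)
    also have "\<dots> = - 2 * z * deriv f z"
      by (rule alg2[OF ne[OF z]])
    finally show ?thesis by (simp add: th_def)
  qed
  have kk: "k = (\<lambda>w. c * K w + 0 * K w)" unfolding k_def by simp
  have Dk: "Dop a0 a1 a2 k z = of_nat n * th f z" if z: "z \<in> ball 0 R" for z
    unfolding kk Dop_lin[OF KH KH _ z, simplified] DK[OF z] c_def by simp
  have kH: "k holomorphic_on ball 0 R" unfolding k_def using KH by (intro holomorphic_intros)
  have uu: "(\<lambda>w. 1 * h w + (-1) * k w) = (\<lambda>w. h w - k w)" by simp
  have uH: "(\<lambda>w. h w - k w) holomorphic_on ball 0 R" using fR(3) kH by (intro holomorphic_intros)
  have uD: "\<forall>z\<in>ball (0::complex) R. Dop a0 a1 a2 (\<lambda>w. h w - k w) z = 0"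
  proof
    fix z :: complex assume z: "z \<in> ball 0 R"
    have "Dop a0 a1 a2 (\<lambda>w. h w - k w) z = 1 * Dop a0 a1 a2 h z + (-1) * Dop a0 a1 a2 k z"
      unfolding uu[symmetric] by (rule Dop_lin[OF fR(3) kH _ z]) simp
    thus "Dop a0 a1 a2 (\<lambda>w. h w - k w) z = 0" using eqh Dk[OF z] z BR by auto
  qed
  have u0: "(\<lambda>w. h w - k w) 0 = 0" by (simp add: h0 k_def K_def L_def g0)
  have hk: "h z = k z" if z: "z \<in> ball 0 R" for z
    using sol_zero[OF uH R uD u0 z] by simp
  have part1: "\<forall>z\<in>ball 0 r. norm (a0 * z) < 1 \<longrightarrow>
        g z = hypGt a0 a1 a2 z \<and>
        h z = - (of_nat n / 2) * (hypF a0 a1 a2 z * Ln (1 - a0 * z) + hypGt a0 a1 a2 z)"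
  proof (intro ballI impI conjI)
    fix z assume z: "z \<in> ball 0 r" "norm (a0 * z) < 1"
    show "g z = hypGt a0 a1 a2 z" by (rule gG[OF z(1)])
    show "h z = - (of_nat n / 2) * (hypF a0 a1 a2 z * Ln (1 - a0 * z) + hypGt a0 a1 a2 z)"
      using hk[OF inR'[OF z]] fF[OF z(1)] gG[OF z(1)] by (simp add: k_def K_def L_def c_def)
  qed
  have cf: "isCont f 0" "isCont g 0"
    using fH gH r by (auto intro!: holomorphic_on_imp_continuous_on continuous_on_interior
          simp: continuous_on_eq_continuous_at interior_open)
  have limf: "(f \<longlongrightarrow> 1) (at 0)" using cf(1) f0 by (simp add: isCont_def)
  have limg: "(g \<longlongrightarrow> 0) (at 0)" using cf(2) g0 by (simp add: isCont_def)
  have limE: "((\<lambda>z. g z / f z) \<longlongrightarrow> 0) (at 0)"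
    using tendsto_divide[OF limg limf] by simp
  have ev1: "eventually (\<lambda>z. norm (g z / f z) < pi / 2) (at 0)"
  proof -
    have "pi / 2 > 0" by simp
    have "\<forall>e>0. eventually (\<lambda>x. dist (g x / f x) 0 < e) (at 0)"
      using limE by (simp only: tendsto_iff)
    hence "eventually (\<lambda>x. dist (g x / f x) 0 < pi / 2) (at 0)" using \<open>pi / 2 > 0\<close> by blast
    thus ?thesis by (simp add: dist_norm)
  qed
  have ev2: "eventually (\<lambda>z. f z \<noteq> 0) (at 0)"
    using tendsto_imp_eventually_ne[OF limf] by simp
  have ev3: "eventually (\<lambda>z. z \<in> ball 0 R - {0}) (at 0)"
    using R by (intro eventually_at_in_open) auto
  have part2: "\<forall>\<^sub>F z in at 0.
        h z = - (of_nat n / 2) * hypF a0 a1 a2 z *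
          Ln ((z * exp (hypGt a0 a1 a2 z / hypF a0 a1 a2 z)) * (1 - a0 * z) / z)"
    using ev1 ev2 ev3
  proof eventually_elim
    case (elim z)
    have zR: "z \<in> ball 0 R" and z0: "z \<noteq> 0" using elim by auto
    have zr: "z \<in> ball 0 r" using zR BR by auto
    define E where "E = g z / f z"
    have EE: "hypGt a0 a1 a2 z / hypF a0 a1 a2 z = E" unfolding E_def using fF[OF zr] gG[OF zr] by simp
    have imE: "\<bar>Im E\<bar> < pi / 2" using elim(1) abs_Im_le_cmod[of E] unfolding E_def by linarith
    have reL: "Re (1 - a0 * z) > 0"
      using inR[OF zR] complex_Re_le_cmod[of "a0 * z"] by simp
    have imL: "\<bar>Im (Ln (1 - a0 * z))\<bar> < pi / 2" by (rule Re_Ln_pos_lt_imp[OF reL])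
    have LnE: "Ln (exp E) = E" using imE by (intro Ln_exp) auto
    have nz: "1 - a0 * z \<noteq> 0" using ne[OF zR] .
    have "(z * exp E) * (1 - a0 * z) / z = exp E * (1 - a0 * z)" using z0 by simp
    moreover have "Ln (exp E * (1 - a0 * z)) = Ln (exp E) + Ln (1 - a0 * z)"
    proof (rule Ln_times_simple)
      show "exp E \<noteq> 0" by simp
      show "1 - a0 * z \<noteq> 0" by (rule nz)
      show "- pi < Im (Ln (exp E)) + Im (Ln (1 - a0 * z))" unfolding LnE using imE imL by linarith
      show "Im (Ln (exp E)) + Im (Ln (1 - a0 * z)) \<le> pi" unfolding LnE using imE imL by linarith
    qed
    ultimately have "Ln ((z * exp E) * (1 - a0 * z) / z) = Ln (exp E) + Ln (1 - a0 * z)" by simp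
    hence LL: "Ln ((z * exp E) * (1 - a0 * z) / z) = E + Ln (1 - a0 * z)" using LnE by simp
    have "h z = c * (f z * Ln (1 - a0 * z) + g z)" using hk[OF zR] by (simp add: k_def K_def L_def)
    also have "g z = f z * E" using elim(2) unfolding E_def by simp
    finally have hz: "h z = c * (f z * Ln (1 - a0 * z) + f z * E)" .
    show ?case unfolding EE LL hz c_def fF[OF zr] by (simp add: algebra_simps)
  qed
  show ?thesis using part1 part2 by blast
qed



lemma cauchy_d1:
  assumes hol: "phi holomorphic_on ball u rho" and rho: "rho > 0"
    and bd: "\<forall>x\<in>ball u rho. norm (phi x) \<le> M"
  shows "norm (deriv phi u) \<le> 2 * M / rho"
proof -
  have sub: "cball u (rho/2) \<subseteq> ball u rho" using rho by auto
  have "norm ((deriv ^^ 1) phi u) \<le> fact 1 * M / (rho/2) ^ 1"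
  proof (rule Cauchy_inequality)
    show "phi holomorphic_on ball u (rho/2)" using rho by (intro holomorphic_on_subset[OF hol] subset_ball) auto
    show "continuous_on (cball u (rho/2)) phi"
      using holomorphic_on_imp_continuous_on[OF hol] sub by (rule continuous_on_subset)
    show "0 < rho/2" using rho by simp
    fix x assume "norm (u - x) = rho/2"
    hence "x \<in> ball u rho" using rho by (simp add: dist_norm)
    thus "norm (phi x) \<le> M" using bd by auto
  qed
  thus ?thesis by (simp add: mult.commute)
qed

lemma cauchy_d2:
  assumes hol: "phi holomorphic_on ball u rho" and rho: "rho > 0"
    and bd: "\<forall>x\<in>ball u rho. norm (phi x) \<le> M"
  shows "norm (deriv (deriv phi) u) \<le> 8 * M / rho^2"
proof -
  have sub: "cball u (rho/2) \<subseteq> ball u rho" using rho by auto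
  have "norm ((deriv ^^ 2) phi u) \<le> fact 2 * M / (rho/2) ^ 2"
  proof (rule Cauchy_inequality)
    show "phi holomorphic_on ball u (rho/2)" using rho by (intro holomorphic_on_subset[OF hol] subset_ball) auto
    show "continuous_on (cball u (rho/2)) phi"
      using holomorphic_on_imp_continuous_on[OF hol] sub by (rule continuous_on_subset)
    show "0 < rho/2" using rho by simp
    fix x assume "norm (u - x) = rho/2"
    hence "x \<in> ball u rho" using rho by (simp add: dist_norm)
    thus "norm (phi x) \<le> M" using bd by auto
  qed
  thus ?thesis by (simp add: numeral_2_eq_2 power2_eq_square field_simps)
qed

lemma taylor2:
  assumes hol: "phi holomorphic_on ball c R" and R: "R > 0"
    and bd: "\<forall>x\<in>ball c R. norm (phi x) \<le> M"
    and w: "w \<in> ball c (R/2)" and h: "norm h < R/4"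
  shows "norm (phi (w + h) - phi w - h * deriv phi w) \<le> 128 * M / R^2 * norm h ^ 2"
proof -
  define B where "B = 128 * M / R^2"
  define S where "S = cball w (norm h)"
  have S34: "S \<subseteq> ball c (3*R/4)"
  proof
    fix x assume "x \<in> S"
    hence "dist w x \<le> norm h" by (simp add: S_def)
    moreover have "dist c w < R/2" using w by simp
    ultimately have "dist c x < 3*R/4" using h dist_triangle[of c x w] by linarith
    thus "x \<in> ball c (3*R/4)" by simp
  qed
  have op: "open (ball c R)" by simp
  have d2: "norm (deriv (deriv phi) x) \<le> B" if x: "x \<in> ball c (3*R/4)" for x
  proof -
    have "ball x (R/4) \<subseteq> ball c R"
    proof
      fix y assume "y \<in> ball x (R/4)"
      hence "dist x y < R/4" by simp
      moreover have "dist c x < 3*R/4" using x by simp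
      ultimately show "y \<in> ball c R" using dist_triangle[of c y x] by simp
    qed
    hence "norm (deriv (deriv phi) x) \<le> 8 * M / (R/4)^2"
      using R bd by (intro cauchy_d2 holomorphic_on_subset[OF hol]) auto
    thus ?thesis by (simp add: B_def power2_eq_square field_simps)
  qed
  have sub: "S \<subseteq> ball c R" using S34 R by (auto simp: subset_eq)
  have wS: "w \<in> S" "w + h \<in> S" by (auto simp: S_def dist_norm)
  have dd: "norm (deriv phi x - deriv phi w) \<le> B * norm (x - w)" if "x \<in> S" for x
  proof (rule field_differentiable_bound[of S "deriv phi" "deriv (deriv phi)" B x w])
    show "convex S" by (simp add: S_def)
    fix z assume "z \<in> S"
    thus "(deriv phi has_field_derivative deriv (deriv phi) z) (at z within S)"
      using sub by (intro has_field_derivative_at_within[OF hol_der2[OF hol op]]) auto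
    show "norm (deriv (deriv phi) z) \<le> B" using d2 S34 \<open>z \<in> S\<close> by auto
  qed (use that wS in auto)
  have "norm ((\<lambda>x. phi x - x * deriv phi w) (w + h) - (\<lambda>x. phi x - x * deriv phi w) w) \<le> (B * norm h) * norm ((w + h) - w)"
  proof (rule field_differentiable_bound[of S _ "\<lambda>x. deriv phi x - deriv phi w"])
    show "convex S" by (simp add: S_def)
    fix z assume z: "z \<in> S"
    have "((\<lambda>x. phi x - x * deriv phi w) has_field_derivative deriv phi z - 1 * deriv phi w) (at z)"
    proof -
      have pz: "(phi has_field_derivative deriv phi z) (at z)"
        by (rule hol_der[OF hol op]) (use sub z in auto)
      show ?thesis using DERIV_diff[OF pz DERIV_cmult_right[OF DERIV_ident, of "deriv phi w"]] by simp
    qed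
    thus "((\<lambda>x. phi x - x * deriv phi w) has_field_derivative deriv phi z - deriv phi w) (at z within S)"
      by (simp add: has_field_derivative_at_within)
    have "norm (z - w) \<le> norm h" using z by (simp add: S_def dist_norm norm_minus_commute)
    moreover have "B \<ge> 0"
    proof -
      have "0 \<le> norm (phi c)" by simp
      also have "\<dots> \<le> M" using bd R by auto
      finally show ?thesis by (simp add: B_def)
    qed
    ultimately show "norm (deriv phi z - deriv phi w) \<le> B * norm h"
      using dd[OF z] by (meson mult_left_mono order_trans)
  qed (use wS in auto)
  thus ?thesis by (simp add: B_def algebra_simps power2_eq_square)
qed

lemma ball_half_sub:
  fixes c w :: complex
  assumes "w \<in> ball c (R/2)" shows "ball w (R/2) \<subseteq> ball c R"
proof
  fix y assume "y \<in> ball w (R/2)"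
  thus "y \<in> ball c R" using assms dist_triangle[of c y w] by simp
qed

lemma sep_deriv1:
  fixes g :: "complex \<Rightarrow> complex \<Rightarrow> complex"
  assumes R: "R > 0" and V: "open V"
    and h1: "\<forall>v\<in>V. (\<lambda>w. g w v) holomorphic_on ball c R"
    and h2: "\<forall>w\<in>ball c R. (\<lambda>v. g w v) holomorphic_on V"
    and bd: "\<forall>w\<in>ball c R. \<forall>v\<in>V. norm (g w v) \<le> M"
  shows "\<forall>w\<in>ball c (R/2). (\<lambda>v. deriv (\<lambda>w. g w v) w) holomorphic_on V"
    and "\<forall>w\<in>ball c (R/2). \<forall>v\<in>V. norm (deriv (\<lambda>w. g w v) w) \<le> 4 * M / R"
    and "\<forall>v\<in>V. (\<lambda>w. deriv (\<lambda>w. g w v) w) holomorphic_on ball c (R/2)"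
proof -
  show "\<forall>v\<in>V. (\<lambda>w. deriv (\<lambda>w. g w v) w) holomorphic_on ball c (R/2)"
  proof
    fix v assume "v \<in> V"
    hence "deriv (\<lambda>w. g w v) holomorphic_on ball c R" using h1 by (intro holomorphic_deriv) auto
    thus "(\<lambda>w. deriv (\<lambda>w. g w v) w) holomorphic_on ball c (R/2)"
    proof (rule holomorphic_on_subset)
      show "ball c (R/2) \<subseteq> ball c R" using R by (intro subset_ball) simp
    qed
  qed
  show "\<forall>w\<in>ball c (R/2). \<forall>v\<in>V. norm (deriv (\<lambda>w. g w v) w) \<le> 4 * M / R"
  proof (intro ballI)
    fix w v assume w: "w \<in> ball c (R/2)" and v: "v \<in> V"
    have "norm (deriv (\<lambda>w. g w v) w) \<le> 2 * M / (R/2)"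
    proof (rule cauchy_d1)
      show "(\<lambda>w. g w v) holomorphic_on ball w (R/2)"
        using holomorphic_on_subset[OF _ ball_half_sub[OF w]] h1 v by blast
      show "R/2 > 0" using R by simp
      show "\<forall>x\<in>ball w (R/2). norm (g x v) \<le> M" using bd v ball_half_sub[OF w] by blast
    qed
    thus "norm (deriv (\<lambda>w. g w v) w) \<le> 4 * M / R" by simp
  qed
  show "\<forall>w\<in>ball c (R/2). (\<lambda>v. deriv (\<lambda>w. g w v) w) holomorphic_on V"
  proof
    fix w assume w: "w \<in> ball c (R/2)"
    define B where "B = 128 * M / R^2"
    define D where "D = (\<lambda>v. deriv (\<lambda>w. g w v) w)"
    define q where "q = (\<lambda>h v. (g (w + h) v - g w v) / h)"
    have wh: "w + h \<in> ball c R" if "norm h < R/4" for h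
    proof -
      have "dist c (w + h) \<le> dist c w + norm h" using dist_triangle[of c "w+h" w] by (simp add: dist_norm)
      moreover have "dist c w < R/2" using w by simp
      ultimately have "dist c (w + h) < R" using that norm_ge_zero[of h] by linarith
      thus ?thesis by simp
    qed
    have wR: "w \<in> ball c R" using w R by auto
    have est: "norm (q h v - D v) \<le> B * norm h" if h: "h \<noteq> 0" "norm h < R/4" and v: "v \<in> V" for h v
    proof -
      have "norm (g (w + h) v - g w v - h * D v) \<le> B * norm h ^ 2"
        unfolding B_def D_def using h1 v bd w h R by (intro taylor2) auto
      moreover have "q h v - D v = (g (w + h) v - g w v - h * D v) / h"
        unfolding q_def using h by (simp add: field_simps)
      ultimately have "norm (q h v - D v) \<le> B * norm h ^ 2 / norm h"
        by (simp add: norm_divide divide_right_mono)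
      also have "\<dots> = B * norm h" using h by (simp add: power2_eq_square)
      finally show ?thesis .
    qed
    have qH: "q h holomorphic_on V" if "norm h < R/4" for h
      unfolding q_def using h2 wh[OF that] wR by (intro holomorphic_intros) auto
    have Bnn: "B \<ge> 0" if "v \<in> V" for v
    proof -
      have "0 \<le> norm (g w v)" by simp
      also have "\<dots> \<le> M" using bd wR \<open>v \<in> V\<close> by auto
      finally show ?thesis by (simp add: B_def)
    qed
    have "\<exists>f'. (D has_field_derivative f') (at v0)" if v0: "v0 \<in> V" for v0
    proof -
      obtain rho where rho: "rho > 0" "cball v0 rho \<subseteq> V" using V v0 open_contains_cball by blast
      note Bnn = Bnn[OF v0]
      have evh: "eventually (\<lambda>h. h \<noteq> 0 \<and> norm h < R/4) (at (0::complex))"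
        unfolding eventually_at using R by (intro exI[of _ "R/4"]) (auto simp: dist_norm)
      have ev: "eventually (\<lambda>h. continuous_on (cball v0 rho) (q h) \<and> q h holomorphic_on ball v0 rho) (at 0)"
          using evh
        proof eventually_elim
          case (elim h)
          hence "q h holomorphic_on V" using qH by auto
          thus ?case using rho ball_subset_cball
            by (meson holomorphic_on_imp_continuous_on continuous_on_subset holomorphic_on_subset order_trans)
        qed
      have ul: "uniform_limit (cball v0 rho) q D (at 0)"
          unfolding uniform_limit_iff
        proof (intro allI impI)
          fix e :: real assume e: "e > 0"
          define d where "d = min (R/4) (e / (B + 1))"
          have d: "d > 0" using R e Bnn by (simp add: d_def)
          show "eventually (\<lambda>h. \<forall>v\<in>cball v0 rho. dist (q h v) (D v) < e) (at 0)"
            unfolding eventually_at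
          proof (intro exI[of _ d] conjI d ballI impI)
            fix h :: complex and v assume h: "h \<noteq> 0 \<and> dist h 0 < d" and v: "v \<in> cball v0 rho"
            have hn: "norm h < R/4" "norm h < e / (B + 1)" using h by (auto simp: d_def dist_norm)
            have "dist (q h v) (D v) \<le> B * norm h" using est[of h v] h hn v rho by (auto simp: dist_norm)
            also have "\<dots> \<le> (B + 1) * norm h" by (simp add: mult_right_mono)
            also have "\<dots> < e" using hn(2) Bnn by (simp add: field_simps)
            finally show "dist (q h v) (D v) < e" .
          qed
        qed
      have "\<not> trivial_limit (at (0::complex))" by simp
      from holomorphic_uniform_limit[OF ev ul this]
      have "continuous_on (cball v0 rho) D \<and> D holomorphic_on ball v0 rho" by blast
      hence "D holomorphic_on ball v0 rho" by blast
      hence "D field_differentiable at v0" using rho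
        by (intro holomorphic_on_imp_differentiable_at[of _ "ball v0 rho"]) auto
      thus ?thesis by (simp add: field_differentiable_def)
    qed
    thus "(\<lambda>v. deriv (\<lambda>w. g w v) w) holomorphic_on V"
      unfolding D_def[symmetric] using V by (simp add: holomorphic_on_open)
  qed
qed



lemma baire_bound:
  fixes phi :: "complex \<Rightarrow> complex \<Rightarrow> real" and r :: real
  assumes r: "r > 0"
    and c1: "\<forall>v\<in>cball 0 (r/2). continuous_on (ball 0 (r/2)) (\<lambda>w. phi w v)"
    and c2: "\<forall>w\<in>ball 0 (r/2). continuous_on (cball 0 (r/2)) (\<lambda>v. phi w v)"
  shows "\<exists>c d M. d > 0 \<and> ball c d \<subseteq> ball 0 (r/2) \<and> (\<forall>w\<in>ball c d. \<forall>v\<in>cball 0 (r/2). phi w v \<le> M)"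
proof -
  define U where "U = ball (0::complex) (r/2)"
  define C where "C = cball (0::complex) (r/2)"
  define X where "X = top_of_set U"
  define E where "E = (\<lambda>m::nat. {w\<in>U. \<forall>v\<in>C. phi w v \<le> real m})"
  have Xc: "completely_metrizable_space X"
    unfolding X_def by (intro completely_metrizable_space_openin completely_metrizable_space_euclidean)
       (simp add: U_def)
  have UE: "\<Union>(range E) = U"
  proof
    show "\<Union>(range E) \<subseteq> U" by (auto simp: E_def)
    show "U \<subseteq> \<Union>(range E)"
    proof
      fix w assume w: "w \<in> U"
      have "\<exists>x\<in>C. \<forall>y\<in>C. phi w y \<le> phi w x"
        using c2 w r by (intro continuous_attains_sup) (auto simp: C_def U_def)
      then obtain x where "\<forall>y\<in>C. phi w y \<le> phi w x" by blast
      moreover obtain m :: nat where "phi w x \<le> real m" using real_arch_simple by blast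
      ultimately have "w \<in> E m" using w by (auto simp: E_def intro: order_trans)
      thus "w \<in> \<Union>(range E)" by blast
    qed
  qed
  have closedE: "closedin X (E m)" for m
  proof -
    have "E m = \<Inter>((\<lambda>v. U \<inter> (\<lambda>w. phi w v) -` {..real m}) ` C)"
      using r by (auto simp: E_def C_def)
    also have "closedin X \<dots>"
      unfolding X_def
    proof (rule closedin_Inter)
      show "(\<lambda>v. U \<inter> (\<lambda>w. phi w v) -` {..real m}) ` C \<noteq> {}" using r by (auto simp: C_def)
      fix S assume "S \<in> (\<lambda>v. U \<inter> (\<lambda>w. phi w v) -` {..real m}) ` C"
      then obtain v where v: "v \<in> C" and S: "S = U \<inter> (\<lambda>w. phi w v) -` {..real m}" by blast
      show "closedin (top_of_set U) S" unfolding S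
        by (rule continuous_closedin_preimage) (use c1 v in \<open>auto simp: U_def C_def\<close>)
    qed
    finally show ?thesis .
  qed
  have "\<exists>m. X interior_of E m \<noteq> {}"
  proof (rule ccontr)
    assume "\<nexists>m. X interior_of E m \<noteq> {}"
    hence "X interior_of \<Union>(range E) = {}"
      using Xc closedE by (intro Baire_category_alt) auto
    moreover have "X interior_of U = U" unfolding X_def
      by (simp add: interior_of_openin U_def)
    moreover have "0 \<in> U" using r by (simp add: U_def)
    ultimately show False using UE by simp
  qed
  then obtain m where "X interior_of E m \<noteq> {}" by blast
  hence "interior (E m) \<noteq> {}" unfolding X_def
    using interior_of_subtopology_open[of euclidean U "E m"] by (auto simp: U_def)
  then obtain c where c: "c \<in> interior (E m)" by blast
  then obtain d where d: "d > 0" "ball c d \<subseteq> E m" using open_contains_ball interior_subset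
    by (meson open_interior subset_trans)
  show ?thesis
  proof (intro exI conjI)
    show "d > 0" by (rule d)
    show "ball c d \<subseteq> ball 0 (r/2)" using d(2) by (auto simp: E_def U_def)
    show "\<forall>w\<in>ball c d. \<forall>v\<in>cball 0 (r/2). phi w v \<le> real m" using d(2) by (auto simp: E_def C_def)
  qed
qed



lemma hol_cont_at:
  assumes "f holomorphic_on S" "open S" "x \<in> S" shows "isCont f x"
  using assms continuous_on_eq_continuous_at holomorphic_on_imp_continuous_on by blast

lemma tendsto_of_real_right: "((\<lambda>t::real. complex_of_real t) \<longlongrightarrow> 0) (at_right 0)"
proof -
  have "((\<lambda>t::real. complex_of_real t) \<longlongrightarrow> complex_of_real 0) (at_right 0)"
    by (intro tendsto_of_real tendsto_ident_at)
  thus ?thesis by simp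
qed

lemma cont_right:
  assumes "f holomorphic_on S" "open S" "0 \<in> S"
  shows "((\<lambda>t::real. f (complex_of_real t)) \<longlongrightarrow> f 0) (at_right 0)"
  using isCont_tendsto_compose[OF hol_cont_at[OF assms] tendsto_of_real_right] .

lemma ode_h:
  fixes n :: nat and a0 a1 a2 :: complex and r :: real
    and P0 H2 :: "complex \<Rightarrow> complex \<Rightarrow> complex"
  assumes r: "r > 0"
    and P0_holo: "holo_polydisc r P0"
    and P0_L1: "\<forall>z1\<in>ball 0 r. \<forall>z2\<in>ball 0 r. L1 n a0 a1 a2 P0 z1 z2 = 0"
    and H2_holo: "holo_polydisc r H2"
    and P2_L1: "\<forall>z1\<in>ball 0 r. \<forall>z2\<in>ball 0 r. z2 \<notin> \<real>\<^sub>\<le>\<^sub>0 \<longrightarrow>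
                  L1 n a0 a1 a2 (\<lambda>w1 w2. P0 w1 w2 * Ln w2 + H2 w1 w2) z1 z2 = 0"
  shows "\<forall>z\<in>ball 0 r. Dop a0 a1 a2 (\<lambda>w. H2 w 0) z = of_nat n * th (\<lambda>w. P0 w 0) z"
proof -
  define rho where "rho = r / 2"
  have rho: "rho > 0" "rho < r" using r by (auto simp: rho_def)
  have Ph1: "\<forall>v\<in>ball 0 r. (\<lambda>w. P0 w v) holomorphic_on ball 0 r"
   and Ph2: "\<forall>w\<in>ball 0 r. (\<lambda>v. P0 w v) holomorphic_on ball 0 r"
   and Hh1: "\<forall>v\<in>ball 0 r. (\<lambda>w. H2 w v) holomorphic_on ball 0 r"
   and Hh2: "\<forall>w\<in>ball 0 r. (\<lambda>v. H2 w v) holomorphic_on ball 0 r"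
    using P0_holo H2_holo by (auto simp: holo_polydisc_def)
  define phi where "phi = (\<lambda>w v. max (norm (P0 w v)) (norm (H2 w v)))"
  have cb: "cball (0::complex) (r/2) \<subseteq> ball 0 r" "ball (0::complex) (r/2) \<subseteq> ball 0 r" using r by auto
  have "\<exists>c d M. d > 0 \<and> ball c d \<subseteq> ball 0 (r/2) \<and> (\<forall>w\<in>ball c d. \<forall>v\<in>cball 0 (r/2). phi w v \<le> M)"
  proof (rule baire_bound[OF r])
    show "\<forall>v\<in>cball 0 (r/2). continuous_on (ball 0 (r/2)) (\<lambda>w. phi w v)"
    proof
      fix v :: complex assume v: "v \<in> cball 0 (r/2)"
      have "continuous_on (ball 0 r) (\<lambda>w. P0 w v)" "continuous_on (ball 0 r) (\<lambda>w. H2 w v)"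
        using Ph1 Hh1 v cb by (auto intro!: holomorphic_on_imp_continuous_on)
      hence "continuous_on (ball 0 r) (\<lambda>w. phi w v)" unfolding phi_def by (intro continuous_intros)
      thus "continuous_on (ball 0 (r/2)) (\<lambda>w. phi w v)" using cb(2) by (rule continuous_on_subset)
    qed
    show "\<forall>w\<in>ball 0 (r/2). continuous_on (cball 0 (r/2)) (\<lambda>v. phi w v)"
    proof
      fix w :: complex assume w: "w \<in> ball 0 (r/2)"
      have "continuous_on (ball 0 r) (\<lambda>v. P0 w v)" "continuous_on (ball 0 r) (\<lambda>v. H2 w v)"
        using Ph2 Hh2 w cb by (auto intro!: holomorphic_on_imp_continuous_on)
      hence "continuous_on (ball 0 r) (\<lambda>v. phi w v)" unfolding phi_def by (intro continuous_intros)
      thus "continuous_on (cball 0 (r/2)) (\<lambda>v. phi w v)" using cb(1) by (rule continuous_on_subset)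
    qed
  qed
  then obtain c d M where d: "d > 0" and cd: "ball c d \<subseteq> ball 0 (r/2)"
    and M: "\<forall>w\<in>ball c d. \<forall>v\<in>cball 0 (r/2). phi w v \<le> M" by blast
  define V where "V = ball (0::complex) rho"
  have Vr: "V \<subseteq> ball 0 r" using cb by (simp add: V_def rho_def)
  have cdr: "ball c d \<subseteq> ball 0 r" using cd cb by auto
  have bdP: "\<forall>w\<in>ball c d. \<forall>v\<in>V. norm (P0 w v) \<le> M"
   and bdH: "\<forall>w\<in>ball c d. \<forall>v\<in>V. norm (H2 w v) \<le> M"
    using M by (auto simp: phi_def V_def rho_def)
  have Ph1': "\<forall>v\<in>V. (\<lambda>w. P0 w v) holomorphic_on ball c d"
   and Hh1': "\<forall>v\<in>V. (\<lambda>w. H2 w v) holomorphic_on ball c d"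
    using Ph1 Hh1 Vr cdr by (auto intro: holomorphic_on_subset)
  have Ph2': "\<forall>w\<in>ball c d. (\<lambda>v. P0 w v) holomorphic_on V"
   and Hh2': "\<forall>w\<in>ball c d. (\<lambda>v. H2 w v) holomorphic_on V"
    using Ph2 Hh2 Vr cdr by (auto intro: holomorphic_on_subset)
  have oV: "open V" by (simp add: V_def)
  define A1 where "A1 = (\<lambda>w v. deriv (\<lambda>w. H2 w v) w)"
  note sH = sep_deriv1[OF d oV Hh1' Hh2' bdH]
  have A1v: "\<forall>w\<in>ball c (d/2). (\<lambda>v. A1 w v) holomorphic_on V" using sH(1) by (simp add: A1_def)
  have A1b: "\<forall>w\<in>ball c (d/2). \<forall>v\<in>V. norm (A1 w v) \<le> 4 * M / d" using sH(2) by (simp add: A1_def)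
  have A1w: "\<forall>v\<in>V. (\<lambda>w. A1 w v) holomorphic_on ball c (d/2)" using sH(3) by (simp add: A1_def)
  have d2: "d/2 > 0" using d by simp
  note sA = sep_deriv1[OF d2 oV A1w A1v A1b]
  have A2v: "\<forall>w\<in>ball c (d/4). (\<lambda>v. deriv (\<lambda>w. A1 w v) w) holomorphic_on V" using sA(1) by simp
  have Hh2V: "\<forall>w\<in>ball c d. (\<lambda>v. H2 w v) holomorphic_on ball 0 rho" using Hh2' by (simp add: V_def)
  have Hh1V: "\<forall>v\<in>ball 0 rho. (\<lambda>w. H2 w v) holomorphic_on ball c d" using Hh1' by (simp add: V_def)
  have bdHV: "\<forall>v\<in>ball 0 rho. \<forall>w\<in>ball c d. norm (H2 w v) \<le> M" using bdH by (auto simp: V_def)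
  note sK = sep_deriv1[where R=rho and V="ball c d" and g="\<lambda>v w. H2 w v" and c=0 and M=M, OF rho(1) open_ball Hh2V Hh1V bdHV]
  have Ph2V: "\<forall>w\<in>ball c d. (\<lambda>v. P0 w v) holomorphic_on ball 0 rho" using Ph2' by (simp add: V_def)
  have Ph1V: "\<forall>v\<in>ball 0 rho. (\<lambda>w. P0 w v) holomorphic_on ball c d" using Ph1' by (simp add: V_def)
  have bdPV: "\<forall>v\<in>ball 0 rho. \<forall>w\<in>ball c d. norm (P0 w v) \<le> M" using bdP by (auto simp: V_def)
  note sQ = sep_deriv1[where R=rho and V="ball c d" and g="\<lambda>v w. P0 w v" and c=0 and M=M, OF rho(1) open_ball Ph2V Ph1V bdPV]
  note sP = sep_deriv1[OF d oV Ph1' Ph2' bdP]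
  define Kf where "Kf = (\<lambda>w v. deriv (\<lambda>v. H2 w v) v)"
  define Qf where "Qf = (\<lambda>w v. deriv (\<lambda>v. P0 w v) v)"
  define A1P where "A1P = (\<lambda>w v. deriv (\<lambda>w. P0 w v) w)"
  have Kw: "\<forall>v\<in>ball 0 (rho/2). (\<lambda>w. Kf w v) holomorphic_on ball c d" using sK(1) by (simp add: Kf_def)
  have Kb: "\<forall>v\<in>ball 0 (rho/2). \<forall>w\<in>ball c d. norm (Kf w v) \<le> 4 * M / rho" using sK(2) by (simp add: Kf_def)
  have Qw: "\<forall>v\<in>ball 0 (rho/2). (\<lambda>w. Qf w v) holomorphic_on ball c d" using sQ(1) by (simp add: Qf_def)
  have A1Pv: "\<forall>w\<in>ball c (d/2). (\<lambda>v. A1P w v) holomorphic_on V" using sP(1) by (simp add: A1P_def)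
  define Pi where "Pi = (\<lambda>w1 w2. P0 w1 w2 * Ln w2 + H2 w1 w2)"
  have key: "Dop a0 a1 a2 (\<lambda>w. H2 w 0) z1 = of_nat n * th (\<lambda>w. P0 w 0) z1" if z1: "z1 \<in> ball c (d/4)" for z1
  proof -
    have z1d: "z1 \<in> ball c d" "z1 \<in> ball c (d/2)" using z1 d by auto
    have z1r: "z1 \<in> ball 0 r" using z1d cdr by auto
    define dK where "dK = (\<lambda>T. deriv (\<lambda>w. Kf w T) z1)"
    define A2f where "A2f = (\<lambda>T. deriv (\<lambda>w. A1 w T) z1)"
    define Ex where "Ex = (\<lambda>T. - of_nat n * (z1 * A1P z1 T) - of_nat n * (T * (z1 * dK T))
       + (z1^2 * A2f T + z1 * A1 z1 T - a0 * z1 * (z1^2 * A2f T + (1+a1+a2) * z1 * A1 z1 T + a1*a2*H2 z1 T)))"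
    have Dexp: "Dop a0 a1 a2 (\<lambda>w. H2 w T) z1 = z1^2 * A2f T + z1 * A1 z1 T - a0 * z1 * (z1^2 * A2f T + (1+a1+a2) * z1 * A1 z1 T + a1*a2*H2 z1 T)"
      if "T \<in> ball 0 r" for T
      unfolding A2f_def A1_def using Dop_expand[OF _ open_ball z1r, of "\<lambda>w. H2 w T"] Hh1 that by simp
    have eq: "L1 n a0 a1 a2 Pi z1 (of_real t) = Ex (of_real t)" if t: "0 < t" "t < rho/2" for t
    proof -
      define T where "T = complex_of_real t"
      have Tr: "T \<in> ball 0 (rho/2)" "T \<in> ball 0 r" using t rho by (auto simp: T_def)
      have Tn: "T \<notin> \<real>\<^sub>\<le>\<^sub>0" "T \<noteq> 0" using t by (auto simp: T_def complex_nonpos_Reals_iff)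
      have th2: "theta2 Pi w T = T * Ln T * Qf w T + P0 w T + T * Kf w T" if w: "w \<in> ball 0 r" for w
      proof -
        have p: "((\<lambda>v. P0 w v) has_field_derivative Qf w T) (at T)"
          unfolding Qf_def by (rule hol_der[OF _ open_ball Tr(2)]) (use Ph2 w in auto)
        have k: "((\<lambda>v. H2 w v) has_field_derivative Kf w T) (at T)"
          unfolding Kf_def by (rule hol_der[OF _ open_ball Tr(2)]) (use Hh2 w in auto)
        have "deriv (\<lambda>v. P0 w v * Ln v + H2 w v) T = Qf w T * Ln T + P0 w T * inverse T + Kf w T"
          using DERIV_imp_deriv[OF DERIV_add[OF DERIV_mult[OF p has_field_derivative_Ln[OF Tn(1)]] k]]
          by (simp add: mult.commute)
        thus ?thesis unfolding theta2_def Pi_def using Tn(2) by (simp add: field_simps)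
      qed
      have "eventually (\<lambda>w. theta2 Pi w T = T * Ln T * Qf w T + P0 w T + T * Kf w T) (nhds z1)"
        using eventually_nhds_in_open[OF open_ball z1r] by eventually_elim (use th2 in auto)
      hence "th (\<lambda>w. theta2 Pi w T) z1 = th (\<lambda>w. T * Ln T * Qf w T + P0 w T + T * Kf w T) z1"
        unfolding th_def by (simp add: deriv_cong_ev)
      also have "\<dots> = z1 * (T * Ln T * deriv (\<lambda>w. Qf w T) z1 + A1P z1 T + T * dK T)"
      proof -
        have q: "((\<lambda>w. Qf w T) has_field_derivative deriv (\<lambda>w. Qf w T) z1) (at z1)"
          by (rule hol_der[OF _ open_ball z1d(1)]) (use Qw Tr in auto)
        have p: "((\<lambda>w. P0 w T) has_field_derivative A1P z1 T) (at z1)"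
          unfolding A1P_def by (rule hol_der[OF _ open_ball z1r]) (use Ph1 Tr in auto)
        have k: "((\<lambda>w. Kf w T) has_field_derivative dK T) (at z1)"
          unfolding dK_def by (rule hol_der[OF _ open_ball z1d(1)]) (use Kw Tr in auto)
        have "((\<lambda>w. T * Ln T * Qf w T + P0 w T + T * Kf w T) has_field_derivative
              T * Ln T * deriv (\<lambda>w. Qf w T) z1 + A1P z1 T + T * dK T) (at z1)"
          by (rule DERIV_add[OF DERIV_add[OF DERIV_cmult[OF q] p] DERIV_cmult[OF k]])
        thus ?thesis unfolding th_def by (simp add: DERIV_imp_deriv)
      qed
      finally have A: "th (\<lambda>w. theta2 Pi w T) z1 = z1 * (T * Ln T * deriv (\<lambda>w. Qf w T) z1 + A1P z1 T + T * dK T)" .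
      have "(\<lambda>w. theta2 P0 w T) = (\<lambda>w. T * Qf w T)" by (simp add: theta2_def Qf_def)
      moreover have "deriv (\<lambda>w. T * Qf w T) z1 = T * deriv (\<lambda>w. Qf w T) z1"
      proof -
        have q: "((\<lambda>w. Qf w T) has_field_derivative deriv (\<lambda>w. Qf w T) z1) (at z1)"
          by (rule hol_der[OF _ open_ball z1d(1)]) (use Qw Tr in auto)
        show ?thesis by (rule DERIV_imp_deriv[OF DERIV_cmult[OF q]])
      qed
      ultimately have "th (\<lambda>w. theta2 P0 w T) z1 = z1 * (T * deriv (\<lambda>w. Qf w T) z1)"
        unfolding th_def by simp
      moreover have "L1 n a0 a1 a2 P0 z1 T = 0" using P0_L1 z1r Tr by auto
      ultimately have B: "Dop a0 a1 a2 (\<lambda>w. P0 w T) z1 = of_nat n * (z1 * (T * deriv (\<lambda>w. Qf w T) z1))"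
        unfolding L1_eq by simp
      have fe: "(\<lambda>w. Pi w T) = (\<lambda>w. Ln T * P0 w T + 1 * H2 w T)" by (simp add: Pi_def mult.commute)
      have C: "Dop a0 a1 a2 (\<lambda>w. Pi w T) z1 = Ln T * Dop a0 a1 a2 (\<lambda>w. P0 w T) z1 + 1 * Dop a0 a1 a2 (\<lambda>w. H2 w T) z1"
        unfolding fe by (rule Dop_lin[OF _ _ open_ball z1r]) (use Ph1 Hh1 Tr in auto)
      show ?thesis unfolding T_def[symmetric] L1_eq A C B Dexp[OF Tr(2)] Ex_def
        by (simp add: algebra_simps)
    qed
    have ev: "eventually (\<lambda>t. Ex (of_real t) = 0) (at_right 0)"
      unfolding eventually_at_right_field
    proof (intro exI[of _ "rho/2"] conjI allI impI)
      show "(0::real) < rho/2" using rho by simp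
      fix t :: real assume "0 < t" "t < rho/2"
      thus "Ex (of_real t) = 0" using eq P2_L1 z1r rho by (auto simp: Pi_def complex_nonpos_Reals_iff)
    qed
    have V0: "0 \<in> V" using rho by (simp add: V_def)
    have z1q: "z1 \<in> ball c (d/4)" by (rule z1)
    have l1: "((\<lambda>t. A1P z1 (of_real t)) \<longlongrightarrow> A1P z1 0) (at_right 0)"
      using A1Pv z1d(2) by (intro cont_right[OF _ oV V0]) auto
    have l3: "((\<lambda>t. A2f (of_real t)) \<longlongrightarrow> A2f 0) (at_right 0)"
      unfolding A2f_def using A2v z1q by (intro cont_right[OF _ oV V0, of "\<lambda>v. deriv (\<lambda>w. A1 w v) z1"]) auto
    have l4: "((\<lambda>t. A1 z1 (of_real t)) \<longlongrightarrow> A1 z1 0) (at_right 0)"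
      using A1v z1d(2) by (intro cont_right[OF _ oV V0]) auto
    have l5: "((\<lambda>t. H2 z1 (of_real t)) \<longlongrightarrow> H2 z1 0) (at_right 0)"
      using Hh2' z1d(1) by (intro cont_right[OF _ oV V0]) auto
    define Cb where "Cb = 2 * (4 * M / rho) / (d/2)"
    have dKb: "norm (dK (of_real t)) \<le> Cb" if t: "0 < t" "t < rho/2" for t
    proof -
      have T: "complex_of_real t \<in> ball 0 (rho/2)" using t by simp
      show ?thesis unfolding dK_def Cb_def
      proof (rule cauchy_d1)
        show "(\<lambda>w. Kf w (complex_of_real t)) holomorphic_on ball z1 (d/2)"
          using holomorphic_on_subset[OF _ ball_half_sub[OF z1d(2)]] Kw T by blast
        show "d/2 > 0" using d by simp
        show "\<forall>x\<in>ball z1 (d/2). norm (Kf x (complex_of_real t)) \<le> 4 * M / rho"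
          using Kb T ball_half_sub[OF z1d(2)] by blast
      qed
    qed
    have l2: "((\<lambda>t. complex_of_real t * (z1 * dK (of_real t))) \<longlongrightarrow> 0) (at_right 0)"
    proof (rule Lim_null_comparison)
      show "eventually (\<lambda>t. norm (complex_of_real t * (z1 * dK (of_real t))) \<le> t * (norm z1 * Cb)) (at_right 0)"
        unfolding eventually_at_right_field
      proof (intro exI[of _ "rho/2"] conjI allI impI)
        show "(0::real) < rho/2" using rho by simp
        fix t :: real assume t: "0 < t" "t < rho/2"
        have "norm (complex_of_real t * (z1 * dK (of_real t))) = t * (norm z1 * norm (dK (of_real t)))"
          using t by (simp add: norm_mult)
        also have "\<dots> \<le> t * (norm z1 * Cb)"
          using dKb[OF t] t by (intro mult_left_mono) auto
        finally show "norm (complex_of_real t * (z1 * dK (of_real t))) \<le> t * (norm z1 * Cb)" .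
      qed
      show "((\<lambda>t. t * (norm z1 * Cb)) \<longlongrightarrow> 0) (at_right 0)"
        by (intro tendsto_mult_left_zero tendsto_ident_at)
    qed
    have lim: "((\<lambda>t. Ex (of_real t)) \<longlongrightarrow> Ex 0) (at_right 0)"
    proof -
      have "((\<lambda>t. Ex (of_real t)) \<longlongrightarrow> - of_nat n * (z1 * A1P z1 0) - of_nat n * 0
       + (z1^2 * A2f 0 + z1 * A1 z1 0 - a0 * z1 * (z1^2 * A2f 0 + (1+a1+a2) * z1 * A1 z1 0 + a1*a2*H2 z1 0))) (at_right 0)"
        unfolding Ex_def by (intro tendsto_intros l1 l2 l3 l4 l5)
      thus ?thesis by (simp add: Ex_def)
    qed
    have "Ex 0 = 0"
    proof (rule tendsto_unique)
      show "at_right (0::real) \<noteq> bot" by simp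
      show "((\<lambda>t. Ex (of_real t)) \<longlongrightarrow> Ex 0) (at_right 0)" by (rule lim)
      show "((\<lambda>t. Ex (of_real t)) \<longlongrightarrow> 0) (at_right 0)" using ev by (rule tendsto_eventually)
    qed
    moreover have "Dop a0 a1 a2 (\<lambda>w. H2 w 0) z1 = Ex 0 + of_nat n * (z1 * A1P z1 0)"
      using Dexp[of 0] r by (simp add: Ex_def)
    ultimately show ?thesis by (simp add: th_def A1P_def)
  qed
  have r0: "(0::complex) \<in> ball 0 r" using r by simp
  have hH: "(\<lambda>w. H2 w 0) holomorphic_on ball 0 r" using Hh1 r0 by blast
  have fH: "(\<lambda>w. P0 w 0) holomorphic_on ball 0 r" using Ph1 r0 by blast
  show ?thesis
  proof
    fix z assume z: "z \<in> ball (0::complex) r"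
    show "Dop a0 a1 a2 (\<lambda>w. H2 w 0) z = of_nat n * th (\<lambda>w. P0 w 0) z"
    proof (rule analytic_continuation_open[where s="ball c (d/4)" and s'="ball 0 r"
          and f="Dop a0 a1 a2 (\<lambda>w. H2 w 0)" and g="\<lambda>z. of_nat n * th (\<lambda>w. P0 w 0) z"])
      show "ball c (d/4) \<noteq> {}" using d by simp
      have "ball c (d/4) \<subseteq> ball c d" by (rule subset_ball) (use d in simp)
      thus "ball c (d/4) \<subseteq> ball 0 r" using cdr by (rule order_trans)
      show "Dop a0 a1 a2 (\<lambda>w. H2 w 0) holomorphic_on ball 0 r" by (rule Dop_holo[OF hH open_ball])
      show "(\<lambda>z. of_nat n * th (\<lambda>w. P0 w 0) z) holomorphic_on ball 0 r"
        using th_holo[OF fH open_ball] by (intro holomorphic_intros)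
    qed (use key z in auto)
  qed
qed



lemma th_theta2_0: "th (\<lambda>w. theta2 F w 0) z = 0"
  by (simp add: th_def theta2_def)

lemma L1_z0: "L1 n a0 a1 a2 F z 0 = Dop a0 a1 a2 (\<lambda>w. F w 0) z"
  unfolding L1_eq th_theta2_0 by simp

theorem mainTheorem7:
  fixes n :: nat and a0 a1 a2 :: complex and r :: real
    and P0 H1 H2 :: "complex \<Rightarrow> complex \<Rightarrow> complex"
  assumes n: "n \<ge> 1"
    and a0: "a0 \<noteq> 0"
    and a12: "a1 + a2 = 1"
    and anpi: "\<forall>l::nat. a1 + of_nat l \<noteq> 0 \<and> a2 + of_nat l \<noteq> 0"
    and r: "r > 0"
    (* Pi^0: holomorphic at 0, Pi^0(0) = 1, solves the system *)
    and P0_holo: "holo_polydisc r P0"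
    and P0_0: "P0 0 0 = 1"
    and P0_L1: "\<forall>z1\<in>ball 0 r. \<forall>z2\<in>ball 0 r. L1 n a0 a1 a2 P0 z1 z2 = 0"
    and P0_L2: "\<forall>z1\<in>ball 0 r. \<forall>z2\<in>ball 0 r. L2 n P0 z1 z2 = 0"
    (* Pi^1 = Pi^0 log z1 + H1, H1 holomorphic at 0, normalized H1(0,0) = 0 *)
    and H1_holo: "holo_polydisc r H1"
    and H1_0: "H1 0 0 = 0"
    and P1_L1: "\<forall>z1\<in>ball 0 r. \<forall>z2\<in>ball 0 r. z1 \<notin> \<real>\<^sub>\<le>\<^sub>0 \<longrightarrow>
                  L1 n a0 a1 a2 (\<lambda>w1 w2. P0 w1 w2 * Ln w1 + H1 w1 w2) z1 z2 = 0"
    and P1_L2: "\<forall>z1\<in>ball 0 r. \<forall>z2\<in>ball 0 r. z1 \<notin> \<real>\<^sub>\<le>\<^sub>0 \<longrightarrow>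
                  L2 n (\<lambda>w1 w2. P0 w1 w2 * Ln w1 + H1 w1 w2) z1 z2 = 0"
    (* Pi^2 = Pi^0 log z2 + H2, H2 holomorphic at 0, normalized H2(0,0) = 0 *)
    and H2_holo: "holo_polydisc r H2"
    and H2_0: "H2 0 0 = 0"
    and P2_L1: "\<forall>z1\<in>ball 0 r. \<forall>z2\<in>ball 0 r. z2 \<notin> \<real>\<^sub>\<le>\<^sub>0 \<longrightarrow>
                  L1 n a0 a1 a2 (\<lambda>w1 w2. P0 w1 w2 * Ln w2 + H2 w1 w2) z1 z2 = 0"
    and P2_L2: "\<forall>z1\<in>ball 0 r. \<forall>z2\<in>ball 0 r. z2 \<notin> \<real>\<^sub>\<le>\<^sub>0 \<longrightarrow>
                  L2 n (\<lambda>w1 w2. P0 w1 w2 * Ln w2 + H2 w1 w2) z1 z2 = 0"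
  shows
    "(\<forall>z\<in>ball 0 r. norm (a0 * z) < 1 \<longrightarrow>
        H1 z 0 = hypGt a0 a1 a2 z \<and>
        H2 z 0 = - (of_nat n / 2) * (hypF a0 a1 a2 z * Ln (1 - a0 * z) + hypGt a0 a1 a2 z))
     \<and> (\<forall>\<^sub>F z in at 0.
        H2 z 0 = - (of_nat n / 2) * hypF a0 a1 a2 z *
          Ln ((z * exp (hypGt a0 a1 a2 z / hypF a0 a1 a2 z)) * (1 - a0 * z) / z))"
proof -
  define f where "f = (\<lambda>w. P0 w 0)"
  define g where "g = (\<lambda>w. H1 w 0)"
  define h where "h = (\<lambda>w. H2 w 0)"
  have r0: "(0::complex) \<in> ball 0 r" using r by simp
  have fH: "f holomorphic_on ball 0 r" and gH: "g holomorphic_on ball 0 r" and hH: "h holomorphic_on ball 0 r"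
    using P0_holo H1_holo H2_holo r0 by (auto simp: holo_polydisc_def f_def g_def h_def)
  have eqf: "\<forall>z\<in>ball 0 r. Dop a0 a1 a2 f z = 0"
  proof
    fix z :: complex assume "z \<in> ball 0 r"
    hence "L1 n a0 a1 a2 P0 z 0 = 0" using P0_L1 r0 by blast
    thus "Dop a0 a1 a2 f z = 0" by (simp add: f_def L1_z0)
  qed
  define S where "S = ball (0::complex) r - \<real>\<^sub>\<le>\<^sub>0"
  have oS: "open S" unfolding S_def by (intro open_Diff) auto
  have SH: "Ln holomorphic_on S" unfolding S_def by (intro holomorphic_on_Ln) auto
  have fS: "f holomorphic_on S" "g holomorphic_on S" using fH gH by (auto simp: S_def intro: holomorphic_on_subset)
  have eqgS: "Dop a0 a1 a2 g z = - 2 * th f z + a0 * z * (2 * th f z + (a1 + a2) * f z)" if z: "z \<in> S" for z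
  proof -
    have zr: "z \<in> ball 0 r" and zn: "z \<notin> \<real>\<^sub>\<le>\<^sub>0" using z by (auto simp: S_def)
    have z0: "z \<noteq> 0" using zn by auto
    have "L1 n a0 a1 a2 (\<lambda>w1 w2. P0 w1 w2 * Ln w1 + H1 w1 w2) z 0 = 0" using P1_L1 zr zn r0 by blast
    hence "0 = Dop a0 a1 a2 (\<lambda>w. f w * Ln w + g w) z" by (simp add: f_def g_def L1_z0)
    also have "\<dots> = Ln z * Dop a0 a1 a2 f z + Dop a0 a1 a2 g z
     + (1 - a0*z) * z^2 * (2*deriv f z * deriv Ln z + f z * deriv (deriv Ln) z)
     + z * f z * deriv Ln z * (1 - a0*z*(1+a1+a2))"
      by (rule Dop_prod[OF fS(1) SH fS(2) oS z])
    also have "\<dots> = Dop a0 a1 a2 g z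
     + (1 - a0*z) * z^2 * (2*deriv f z * (1 / z) + f z * (- 1 / z^2))
     + z * f z * (1 / z) * (1 - a0*z*(1+a1+a2))"
      using eqf zr zn by (simp add: deriv_Ln_eq deriv2_Ln_eq)
    also have "\<dots> = Dop a0 a1 a2 g z - (- 2 * th f z + a0 * z * (2 * th f z + (a1 + a2) * f z))"
      using z0 by (simp add: th_def field_simps power2_eq_square)
    finally show ?thesis by simp
  qed
  have eqg: "\<forall>z\<in>ball 0 r. Dop a0 a1 a2 g z = - 2 * th f z + a0 * z * (2 * th f z + (a1 + a2) * f z)"
  proof
    fix z assume z: "z \<in> ball (0::complex) r"
    show "Dop a0 a1 a2 g z = - 2 * th f z + a0 * z * (2 * th f z + (a1 + a2) * f z)"
    proof (rule analytic_continuation_open[where s=S and s'="ball 0 r"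
          and f="Dop a0 a1 a2 g" and g="\<lambda>z. - 2 * th f z + a0 * z * (2 * th f z + (a1 + a2) * f z)"])
      have "complex_of_real (r/2) \<in> S" using r by (auto simp: S_def complex_nonpos_Reals_iff)
      thus "S \<noteq> {}" by blast
      show "S \<subseteq> ball 0 r" by (auto simp: S_def)
      show "Dop a0 a1 a2 g holomorphic_on ball 0 r" by (rule Dop_holo[OF gH open_ball])
      show "(\<lambda>z. - 2 * th f z + a0 * z * (2 * th f z + (a1 + a2) * f z)) holomorphic_on ball 0 r"
        using th_holo[OF fH open_ball] fH by (intro holomorphic_intros)
    qed (use eqgS z oS in auto)
  qed
  have eqh: "\<forall>z\<in>ball 0 r. Dop a0 a1 a2 h z = of_nat n * th f z"
    unfolding h_def f_def by (rule ode_h[OF r P0_holo P0_L1 H2_holo P2_L1])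
  have "(\<forall>z\<in>ball 0 r. norm (a0 * z) < 1 \<longrightarrow>
        g z = hypGt a0 a1 a2 z \<and>
        h z = - (of_nat n / 2) * (hypF a0 a1 a2 z * Ln (1 - a0 * z) + hypGt a0 a1 a2 z))
     \<and> (\<forall>\<^sub>F z in at 0.
        h z = - (of_nat n / 2) * hypF a0 a1 a2 z *
          Ln ((z * exp (hypGt a0 a1 a2 z / hypF a0 a1 a2 z)) * (1 - a0 * z) / z))"
    by (rule final_from_ODE[OF a0 a12 anpi r fH gH hH _ _ _ eqf eqg eqh])
       (auto simp: f_def g_def h_def P0_0 H1_0 H2_0)
  thus ?thesis by (simp add: g_def h_def)
qed

end
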